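(* For all $\mu,\nu\in\mathcal P(\mathcal X)$, the operator $\mathrm{Id}-K_{\mu,\nu}K_{\nu,\mu}$ is a well-defined continuous linear bijection of $C(\mathcal X)/\mathbb R$ (invertible on $C(\mathcal X)/\mathbb R$).
   Context: $(\mathcal X,\mathsf d)$ compact metric space; $\varepsilon>0$; $c\in C(\mathcal X\times\mathcal X)$ symmetric, nonnegative, with $\exp(-c/\varepsilon)$ a positive definite universal kernel. Schrödinger potentials: $T_\varepsilon(f,\mu)(y):=-\varepsilon\log\int\exp((f(x)-c(x,y))/\varepsilon)d\mu(x)$; $(f_{\mu,\nu},f_{\nu,\mu})$ the unique continuous pair with $f_{\mu,\nu}=T_\varepsilon(f_{\nu,\mu},\nu)$, $f_{\nu,\mu}=T_\varepsilon(f_{\mu,\nu},\mu)$, $\int f_{\mu,\nu}d\mu=\int f_{\nu,\mu}d\nu$. $k_{\mu,\nu}(x,y):=\exp((f_{\mu,\nu}(x)+f_{\nu,\mu}(y)-c(x,y))/\varepsilon)$; $H_{\mu,\nu}[\sigma](x):=\int k_{\mu,\nu}(x,y)d\sigma(y)$ for $\sigma\in\mathcal M(\mathcal X)$; $K_{\mu,\nu}[\phi]:=H_{\mu,\nu}[\phi\nu]$ for $\phi\in C(\mathcal X)$ (so $K_{\mu,\nu}[1]=1$). $C(\mathcal X)/\mathbb R$ carries the quotient norm $\inf_{\lambda}\|\phi-\lambda\|_\infty$. *)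

theory Defs
  imports "HOL-Analysis.Analysis" "HOL-Probability.Probability"
begin

definition sup_norm :: "('a \<Rightarrow> real) \<Rightarrow> real" where
  "sup_norm f = (SUP x. \<bar>f x\<bar>)"

definition quot_norm :: "('a \<Rightarrow> real) \<Rightarrow> real" where
  "quot_norm \<phi> = (INF l. sup_norm (\<lambda>x. \<phi> x - l))"

definition pos_def_kernel :: "('a \<Rightarrow> 'a \<Rightarrow> real) \<Rightarrow> bool" where
  "pos_def_kernel k \<longleftrightarrow> (\<forall>x y. k x y = k y x) \<and>
     (\<forall>n (xs :: nat \<Rightarrow> 'a) (a :: nat \<Rightarrow> real).
        (\<Sum>i<n. \<Sum>j<n. a i * a j * k (xs i) (xs j)) \<ge> 0)"

definition universal_kernel :: "('a::topological_space \<Rightarrow> 'a \<Rightarrow> real) \<Rightarrow> bool" where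
  "universal_kernel k \<longleftrightarrow> (\<forall>x. continuous_on UNIV (k x)) \<and>
     (\<forall>g. continuous_on UNIV g \<longrightarrow> (\<forall>e>0. \<exists>n (xs :: nat \<Rightarrow> 'a) (a :: nat \<Rightarrow> real).
        \<forall>y. \<bar>g y - (\<Sum>i<n. a i * k (xs i) y)\<bar> < e))"

definition T_eps :: "real \<Rightarrow> ('a \<Rightarrow> 'a \<Rightarrow> real) \<Rightarrow> ('a \<Rightarrow> real) \<Rightarrow> 'a measure \<Rightarrow> 'a \<Rightarrow> real" where
  "T_eps eps c f \<mu> y = - eps * ln (\<integral>x. exp ((f x - c x y) / eps) \<partial>\<mu>)"

definition schr_pair :: "real \<Rightarrow> ('a::topological_space \<Rightarrow> 'a \<Rightarrow> real) \<Rightarrow> 'a measure \<Rightarrow> 'a measure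
    \<Rightarrow> ('a \<Rightarrow> real) \<times> ('a \<Rightarrow> real)" where
  "schr_pair eps c \<mu> \<nu> = (THE p. continuous_on UNIV (fst p) \<and> continuous_on UNIV (snd p) \<and>
      fst p = T_eps eps c (snd p) \<nu> \<and> snd p = T_eps eps c (fst p) \<mu> \<and>
      (\<integral>x. fst p x \<partial>\<mu>) = (\<integral>x. snd p x \<partial>\<nu>))"

text \<open>f_{mu,nu}; note f_{nu,mu} = schr_pot eps c nu mu.\<close>
definition schr_pot :: "real \<Rightarrow> ('a::topological_space \<Rightarrow> 'a \<Rightarrow> real) \<Rightarrow> 'a measure \<Rightarrow> 'a measure
    \<Rightarrow> 'a \<Rightarrow> real" where
  "schr_pot eps c \<mu> \<nu> = fst (schr_pair eps c \<mu> \<nu>)"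

definition k_eps :: "real \<Rightarrow> ('a::topological_space \<Rightarrow> 'a \<Rightarrow> real) \<Rightarrow> 'a measure \<Rightarrow> 'a measure
    \<Rightarrow> 'a \<Rightarrow> 'a \<Rightarrow> real" where
  "k_eps eps c \<mu> \<nu> x y = exp ((schr_pot eps c \<mu> \<nu> x + schr_pot eps c \<nu> \<mu> y - c x y) / eps)"

definition H_op :: "real \<Rightarrow> ('a::topological_space \<Rightarrow> 'a \<Rightarrow> real) \<Rightarrow> 'a measure \<Rightarrow> 'a measure
    \<Rightarrow> 'a measure \<Rightarrow> 'a \<Rightarrow> real" where
  "H_op eps c \<mu> \<nu> \<sigma> x = (\<integral>y. k_eps eps c \<mu> \<nu> x y \<partial>\<sigma>)"

definition K_op :: "real \<Rightarrow> ('a::topological_space \<Rightarrow> 'a \<Rightarrow> real) \<Rightarrow> 'a measure \<Rightarrow> 'a measure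
    \<Rightarrow> ('a \<Rightarrow> real) \<Rightarrow> 'a \<Rightarrow> real" where
  "K_op eps c \<mu> \<nu> \<phi> x = (\<integral>y. k_eps eps c \<mu> \<nu> x y * \<phi> y \<partial>\<nu>)"

definition L_op :: "real \<Rightarrow> ('a::topological_space \<Rightarrow> 'a \<Rightarrow> real) \<Rightarrow> 'a measure \<Rightarrow> 'a measure
    \<Rightarrow> ('a \<Rightarrow> real) \<Rightarrow> 'a \<Rightarrow> real" where
  "L_op eps c \<mu> \<nu> \<phi> x = \<phi> x - K_op eps c \<mu> \<nu> (K_op eps c \<nu> \<mu> \<phi>) x"

end

theory Submission imports Defs begin

lemma cont_bounded:
  fixes h :: "'a::metric_space \<Rightarrow> real"
  assumes "compact (UNIV::'a set)" "continuous_on UNIV h"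
  shows "\<exists>B. \<forall>x. \<bar>h x\<bar> \<le> B"
proof -
  have "compact (h ` UNIV)" using assms compact_continuous_image by blast
  then have "bounded (h ` UNIV)" by (rule compact_imp_bounded)
  then obtain B where "\<forall>y\<in>h ` UNIV. norm y \<le> B" by (auto simp: bounded_iff)
  then show ?thesis by auto
qed

lemma compact_UNIV_prod:
  assumes "compact (UNIV::'a::metric_space set)"
  shows "compact (UNIV::('a\<times>'a) set)"
  using compact_Times[OF assms assms] by simp

lemma osc_zero:
  fixes h :: "'a::metric_space \<Rightarrow> real"
  assumes cpt: "compact (UNIV::'a set)" and hc: "continuous_on UNIV h"
    and k: "\<kappa> < 1"
    and contr: "\<And>D. (\<forall>x x'. h x - h x' \<le> D) \<Longrightarrow> (\<forall>x x'. h x - h x' \<le> \<kappa> * D)"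
  shows "h x = h x'"
proof -
  have c2: "continuous_on UNIV (\<lambda>p::'a\<times>'a. h (fst p) - h (snd p))"
    by (intro continuous_intros continuous_on_compose2[OF hc]) auto
  obtain p where p: "\<forall>q. h (fst q) - h (snd q) \<le> h (fst p) - h (snd p)"
    using continuous_attains_sup[OF compact_UNIV_prod[OF cpt] _ c2] by auto
  define D where "D = h (fst p) - h (snd p)"
  have D0: "D \<ge> 0" using p[rule_format, of "(fst p, fst p)"] by (simp add: D_def)
  have all: "\<forall>x x'. h x - h x' \<le> D" using p unfolding D_def
    by (metis fst_conv snd_conv)
  then have "\<forall>x x'. h x - h x' \<le> \<kappa> * D" by (rule contr)
  then have "D \<le> \<kappa> * D" unfolding D_def by blast
  then have "D \<le> 0" using k D0 by (smt (verit) mult_le_cancel_right1)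
  then show ?thesis using all[rule_format, of x x'] all[rule_format, of x' x] by simp
qed


lemma fix_mod_const:
  fixes F :: "('a::metric_space \<Rightarrow> real) \<Rightarrow> 'a \<Rightarrow> real"
  assumes cpt: "compact (UNIV::'a set)"
    and Fc: "\<And>f. continuous_on UNIV f \<Longrightarrow> continuous_on UNIV (F f)"
    and Fcontr: "\<And>f g D. continuous_on UNIV f \<Longrightarrow> continuous_on UNIV g \<Longrightarrow>
        (\<forall>x x'. (f x - g x) - (f x' - g x') \<le> D) \<Longrightarrow>
        (\<forall>x x'. (F f x - F g x) - (F f x' - F g x') \<le> \<kappa> * D)"
    and Flip: "\<And>f g e. continuous_on UNIV f \<Longrightarrow> continuous_on UNIV g \<Longrightarrow>
        (\<forall>x. \<bar>f x - g x\<bar> \<le> e) \<Longrightarrow> (\<forall>x. \<bar>F f x - F g x\<bar> \<le> e)"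
    and k0: "0 \<le> \<kappa>" and k1: "\<kappa> < 1"
  shows "\<exists>f k. continuous_on UNIV f \<and> (\<forall>x. F f x = f x + k)"
proof -
  define x0 :: 'a where "x0 = undefined"
  define G where "G f = (\<lambda>x. F f x - F f x0)" for f
  define s where "s n = (G ^^ n) (\<lambda>_. 0)" for n
  have sS: "s (Suc n) = G (s n)" for n by (simp add: s_def)
  have Gc: "continuous_on UNIV f \<Longrightarrow> continuous_on UNIV (G f)" for f
    unfolding G_def by (intro continuous_intros Fc)
  have sc: "continuous_on UNIV (s n)" for n
    by (induction n) (auto simp: s_def intro!: Gc continuous_intros)
  have s0: "s n x0 = 0" for n
    by (cases n) (auto simp: s_def G_def)
  obtain B where B: "\<forall>x. \<bar>s 1 x\<bar> \<le> B" using cont_bounded[OF cpt sc] by blast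
  define D0 where "D0 = 2 * B"
  have D0: "\<forall>x x'. (s (Suc 0) x - s 0 x) - (s (Suc 0) x' - s 0 x') \<le> D0"
  proof (intro allI)
    fix x x' show "(s (Suc 0) x - s 0 x) - (s (Suc 0) x' - s 0 x') \<le> D0"
      using B[rule_format, of x] B[rule_format, of x'] by (simp add: s_def D0_def)
  qed
  have step: "\<forall>x x'. (s (Suc n) x - s n x) - (s (Suc n) x' - s n x') \<le> \<kappa>^n * D0" for n
  proof (induction n)
    case 0 then show ?case using D0 by simp
  next
    case (Suc n)
    have "\<forall>x x'. (F (s (Suc n)) x - F (s n) x) - (F (s (Suc n)) x' - F (s n) x') \<le> \<kappa> * (\<kappa>^n * D0)"
      by (rule Fcontr[OF sc sc Suc])
    moreover have "(G f x - G g x) - (G f x' - G g x') = (F f x - F g x) - (F f x' - F g x')" for f g x x'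
      by (simp add: G_def)
    ultimately show ?case unfolding sS[of "Suc n"] sS[of n] by (simp add: mult.assoc)
  qed
  have dB: "norm (s (Suc n) x - s n x) \<le> \<kappa>^n * D0" for n x
    using step[of n, rule_format, of x x0] step[of n, rule_format, of x0 x]
    by (simp add: s0 abs_le_iff)
  have summ: "summable (\<lambda>n. \<kappa>^n * D0)"
    using k0 k1 by (intro summable_mult2 summable_geometric) simp
  define S where "S x = (\<Sum>i. s (Suc i) x - s i x)" for x
  have ul0: "uniform_limit UNIV (\<lambda>n x. \<Sum>i<n. s (Suc i) x - s i x) S sequentially"
    unfolding S_def by (rule Weierstrass_m_test[OF _ summ]) (rule dB)
  have "(\<lambda>n x. \<Sum>i<n. s (Suc i) x - s i x) = s"
  proof (intro ext)
    fix n x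
    have "(\<Sum>i<n. s (Suc i) x - s i x) = s n x - s 0 x" by (rule sum_lessThan_telescope)
    then show "(\<Sum>i<n. s (Suc i) x - s i x) = s n x" by (simp add: s_def)
  qed
  with ul0 have ul: "uniform_limit UNIV s S sequentially" by simp
  have Sc: "continuous_on UNIV S"
    by (rule uniform_limit_theorem[OF _ ul]) (auto simp: sc)
  have fixS: "G S x = S x" for x
  proof -
    have "\<bar>G S x - S x\<bar> \<le> 3 * e" if e: "e > 0" for e
    proof -
      from ul e have "\<forall>\<^sub>F n in sequentially. \<forall>x\<in>UNIV. dist (s n x) (S x) < e"
        unfolding uniform_limit_iff by blast
      then obtain N where N: "\<And>n x. n \<ge> N \<Longrightarrow> dist (s n x) (S x) < e"
        unfolding eventually_sequentially by blast
      have "\<forall>x. \<bar>S x - s N x\<bar> \<le> e" using N[of N] by (simp add: dist_real_def less_imp_le abs_minus_commute)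
      then have FF: "\<forall>x. \<bar>F S x - F (s N) x\<bar> \<le> e" by (rule Flip[OF Sc sc])
      have a: "\<bar>F S x - F (s N) x\<bar> \<le> e" and b: "\<bar>F S x0 - F (s N) x0\<bar> \<le> e"
        using FF by blast+
      have 1: "\<bar>G S x - G (s N) x\<bar> \<le> 2 * e"
        using a b unfolding G_def abs_le_iff by linarith
      have 2: "\<bar>s (Suc N) x - S x\<bar> \<le> e" using N[of "Suc N" x] by (simp add: dist_real_def)
      show ?thesis using 1 2 by (simp add: sS abs_le_iff)
    qed
    show ?thesis
    proof (rule ccontr)
      assume "G S x \<noteq> S x"
      then have "\<bar>G S x - S x\<bar> / 6 > 0" by simp
      from this[THEN \<open>\<And>e. e > 0 \<Longrightarrow> \<bar>G S x - S x\<bar> \<le> 3 * e\<close>]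
      show False using \<open>\<bar>G S x - S x\<bar> / 6 > 0\<close> by (simp add: field_simps)
    qed
  qed
  show ?thesis
  proof (intro exI conjI allI)
    show "continuous_on UNIV S" by (rule Sc)
    fix x show "F S x = S x + F S x0" using fixS[of x] by (simp add: G_def)
  qed
qed

definition Zf :: "real \<Rightarrow> ('a \<Rightarrow> 'a \<Rightarrow> real) \<Rightarrow> ('a \<Rightarrow> real) \<Rightarrow> 'a measure \<Rightarrow> 'a \<Rightarrow> real" where
  "Zf eps c f M y = (\<integral>x. exp ((f x - c x y) / eps) \<partial>M)"

lemma T_Zf: "T_eps eps c f M y = - eps * ln (Zf eps c f M y)"
  by (simp add: T_eps_def Zf_def)

lemma conv_ineq:
  fixes L \<theta> v :: real
  assumes L: "0 \<le> L" and t0: "0 \<le> \<theta>" and t1: "\<theta> \<le> 1" and v1: "1 \<le> v" and vr: "v \<le> exp L"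
  shows "v \<le> exp ((1 - \<theta>) * L) * (\<theta> * v + 1 - \<theta>)"
proof -
  define \<rho> where "\<rho> = exp ((1 - \<theta>) * L)"
  have r1: "1 \<le> \<rho>" unfolding \<rho>_def using L t1 by simp
  have "exp ((1 - \<theta>) *\<^sub>R 0 + \<theta> *\<^sub>R L) \<le> (1 - \<theta>) * exp 0 + \<theta> * exp L"
    by (rule convex_onD[OF exp_convex]) (use t0 t1 in auto)
  then have cv: "exp (\<theta> * L) \<le> \<theta> * exp L + 1 - \<theta>" by simp
  have "exp L = \<rho> * exp (\<theta> * L)" unfolding \<rho>_def by (simp add: exp_add[symmetric] algebra_simps)
  then have at_r: "exp L \<le> \<rho> * (\<theta> * exp L + 1 - \<theta>)"
    using cv r1 by (metis mult_left_mono order_trans zero_le_one)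
  show ?thesis
  proof (cases "1 - \<rho> * \<theta> \<ge> 0")
    case True
    have "v * (1 - \<rho> * \<theta>) \<le> exp L * (1 - \<rho> * \<theta>)" by (rule mult_right_mono[OF vr True])
    also have "\<dots> \<le> \<rho> * (1 - \<theta>)" using at_r by (simp add: algebra_simps)
    finally show ?thesis unfolding \<rho>_def[symmetric] by (simp add: algebra_simps)
  next
    case False
    have "v * (1 - \<rho> * \<theta>) \<le> 1 * (1 - \<rho> * \<theta>)" using False v1 by (intro mult_right_mono_neg) auto
    also have "\<dots> \<le> \<rho> * (1 - \<theta>)" using r1 t1 by (simp add: algebra_simps)
    finally show ?thesis unfolding \<rho>_def[symmetric] by (simp add: algebra_simps)
  qed
qed


definition Qop :: "'a measure \<Rightarrow> ('a \<Rightarrow> 'a \<Rightarrow> real) \<Rightarrow> ('a \<Rightarrow> real) \<Rightarrow> 'a \<Rightarrow> real" where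
  "Qop M q \<phi> x = (\<integral>y. q x y * \<phi> y \<partial>M)"

definition SPred :: "real \<Rightarrow> ('a::topological_space \<Rightarrow> 'a \<Rightarrow> real) \<Rightarrow> 'a measure \<Rightarrow> 'a measure
    \<Rightarrow> ('a \<Rightarrow> real) \<times> ('a \<Rightarrow> real) \<Rightarrow> bool" where
  "SPred eps c \<mu> \<nu> p \<longleftrightarrow> continuous_on UNIV (fst p) \<and> continuous_on UNIV (snd p) \<and>
      fst p = T_eps eps c (snd p) \<nu> \<and> snd p = T_eps eps c (fst p) \<mu> \<and>
      (\<integral>x. fst p x \<partial>\<mu>) = (\<integral>x. snd p x \<partial>\<nu>)"

lemma schr_pair_SPred: "schr_pair eps c \<mu> \<nu> = (THE p. SPred eps c \<mu> \<nu> p)"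
  by (simp add: schr_pair_def SPred_def)

definition \<theta>c :: "real \<Rightarrow> real \<Rightarrow> real" where "\<theta>c eps Cm = exp (- 2 * Cm / eps)"

lemma sq_lt1:
  fixes \<theta> :: real
  assumes "0 < \<theta>" "\<theta> \<le> 1"
  shows "(1 - \<theta>)^2 < 1"
proof -
  have "(1 - \<theta>) * (1 - \<theta>) \<le> 1 * (1 - \<theta>)" by (rule mult_right_mono) (use assms in auto)
  then show ?thesis using assms by (simp add: power2_eq_square)
qed

lemma sup_norm_ge:
  fixes h :: "'a::metric_space \<Rightarrow> real"
  assumes cpt: "compact (UNIV::'a set)" and hc: "continuous_on UNIV h"
  shows "\<bar>h x\<bar> \<le> sup_norm h"
proof -
  obtain B where B: "\<forall>x. \<bar>h x\<bar> \<le> B" using cont_bounded[OF cpt hc] by blast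
  have "bdd_above (range (\<lambda>x. \<bar>h x\<bar>))" using B by (auto intro: bdd_aboveI)
  then show ?thesis unfolding sup_norm_def by (rule cSUP_upper[OF UNIV_I])
qed

lemma sup_norm_nonneg:
  fixes h :: "'a::metric_space \<Rightarrow> real"
  assumes cpt: "compact (UNIV::'a set)" and hc: "continuous_on UNIV h"
  shows "0 \<le> sup_norm h"
  using sup_norm_ge[OF cpt hc, of undefined] by linarith

lemma sup_norm_le:
  fixes h :: "'a::metric_space \<Rightarrow> real"
  assumes "\<And>x. \<bar>h x\<bar> \<le> B"
  shows "sup_norm h \<le> B"
  unfolding sup_norm_def by (rule cSUP_least) (auto simp: assms)

locale sk =
  fixes eps :: real and c :: "'a::metric_space \<Rightarrow> 'a \<Rightarrow> real" and M :: "'a measure"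
  assumes cpt: "compact (UNIV :: 'a set)"
    and eps: "eps > 0"
    and c_cont: "continuous_on UNIV (\<lambda>(x, y). c x y)"
    and c_sym: "\<And>x y. c x y = c y x"
    and c_nonneg: "\<And>x y. c x y \<ge> 0"
    and prob: "prob_space M" and sets: "sets M = sets borel"
begin

lemma c_cont2: "continuous_on UNIV (\<lambda>p. c (fst p) (snd p))"
  using c_cont by (simp add: case_prod_beta')

lemma c_cont2': "continuous_on UNIV (\<lambda>p. c (snd p) (fst p))"
proof -
  have "continuous_on UNIV ((\<lambda>p. c (fst p) (snd p)) \<circ> (\<lambda>p. (snd p, fst p)))"
    by (intro continuous_on_compose continuous_intros c_cont2[THEN continuous_on_subset]) auto
  then show ?thesis by (simp add: o_def)
qed

lemma meas: "continuous_on UNIV h \<Longrightarrow> (h :: 'a \<Rightarrow> real) \<in> borel_measurable M"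
  using borel_measurable_continuous_onI measurable_cong_sets[OF sets refl] by blast

lemma integ: "continuous_on UNIV h \<Longrightarrow> integrable M (h :: 'a \<Rightarrow> real)"
proof -
  assume h: "continuous_on UNIV h"
  obtain B where "\<forall>x. \<bar>h x\<bar> \<le> B" using cont_bounded[OF cpt h] by blast
  then show ?thesis
    using prob by (intro finite_measure.integrable_const_bound[where B=B] meas h)
      (auto simp: prob_space_def)
qed

lemma measM[simp]: "measure M (space M) = 1"
  using prob by (simp add: prob_space.prob_space)

lemma int_const[simp]: "(\<integral>x. (a::real) \<partial>M) = a"
  by simp

lemma int_mono: "continuous_on UNIV (g::'a\<Rightarrow>real) \<Longrightarrow> continuous_on UNIV h \<Longrightarrow> (\<And>x. g x \<le> h x) \<Longrightarrow>
   (\<integral>x. g x \<partial>M) \<le> (\<integral>x. h x \<partial>M)"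
  by (intro integral_mono integ) auto

lemma int_lower: "continuous_on UNIV (h::'a\<Rightarrow>real) \<Longrightarrow> (\<And>x. a \<le> h x) \<Longrightarrow> a \<le> (\<integral>x. h x \<partial>M)"
  using int_mono[of "\<lambda>_. a" h] by simp

lemma int_upper: "continuous_on UNIV (h::'a\<Rightarrow>real) \<Longrightarrow> (\<And>x. h x \<le> a) \<Longrightarrow> (\<integral>x. h x \<partial>M) \<le> a"
  using int_mono[of h "\<lambda>_. a"] by simp

lemma int_pos: "continuous_on UNIV (h::'a\<Rightarrow>real) \<Longrightarrow> (\<And>x. 0 < h x) \<Longrightarrow> 0 < (\<integral>x. h x \<partial>M)"
proof -
  assume h: "continuous_on UNIV h" and p: "\<And>x. 0 < h x"
  obtain x0 where "\<forall>x. h x0 \<le> h x" using continuous_attains_inf[OF cpt _ h] by auto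
  then have "h x0 \<le> (\<integral>x. h x \<partial>M)" by (intro int_lower h) auto
  with p[of x0] show ?thesis by simp
qed

lemma int_add: "continuous_on UNIV (g::'a\<Rightarrow>real) \<Longrightarrow> continuous_on UNIV h \<Longrightarrow>
   (\<integral>x. g x + h x \<partial>M) = (\<integral>x. g x \<partial>M) + (\<integral>x. h x \<partial>M)"
  by (rule Bochner_Integration.integral_add[OF integ integ])

lemma int_diff: "continuous_on UNIV (g::'a\<Rightarrow>real) \<Longrightarrow> continuous_on UNIV h \<Longrightarrow>
   (\<integral>x. g x - h x \<partial>M) = (\<integral>x. g x \<partial>M) - (\<integral>x. h x \<partial>M)"
  by (rule Bochner_Integration.integral_diff[OF integ integ])

lemma param_cont:
  assumes hc: "continuous_on UNIV (\<lambda>p::'a\<times>'a. h (fst p) (snd p) :: real)"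
  shows "continuous_on UNIV (\<lambda>x. \<integral>y. h x y \<partial>M)"
  unfolding continuous_on_iff
proof (intro ballI allI impI)
  fix x and e :: real assume e: "e > 0"
  have uc: "uniformly_continuous_on UNIV (\<lambda>p. h (fst p) (snd p))"
    by (rule compact_uniformly_continuous[OF hc compact_UNIV_prod[OF cpt]])
  obtain d where d: "d > 0" and dd: "\<And>p p'. dist p' p < d \<Longrightarrow>
      dist (h (fst p') (snd p')) (h (fst p) (snd p)) < e / 2"
    using uc[unfolded uniformly_continuous_on_def, rule_format, of "e/2"] e by auto
  have hx: "continuous_on UNIV (h z)" for z
  proof -
    have "continuous_on UNIV ((\<lambda>p. h (fst p) (snd p)) \<circ> (\<lambda>y. (z, y)))"
      by (intro continuous_on_compose continuous_intros hc[THEN continuous_on_subset]) auto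
    then show ?thesis by (simp add: o_def)
  qed
  show "\<exists>d>0. \<forall>x'\<in>UNIV. dist x' x < d \<longrightarrow> dist (\<integral>y. h x' y \<partial>M) (\<integral>y. h x y \<partial>M) < e"
  proof (intro exI conjI ballI impI)
    fix x' assume "dist x' x < d"
    then have b: "\<bar>h x' y - h x y\<bar> \<le> e/2" for y
      using dd[of "(x, y)" "(x', y)"] by (simp add: dist_Pair_Pair dist_real_def dist_commute abs_minus_commute)
    have b1: "h x' y \<le> h x y + e/2" for y using abs_le_D1[OF b[of y]] by linarith
    have b2: "h x y - e/2 \<le> h x' y" for y using abs_le_D2[OF b[of y]] by linarith
    have "(\<integral>y. h x' y \<partial>M) \<le> (\<integral>y. h x y + e/2 \<partial>M)"
      using b1 by (intro int_mono hx continuous_intros)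
    moreover have "(\<integral>y. h x y - e/2 \<partial>M) \<le> (\<integral>y. h x' y \<partial>M)"
      using b2 by (intro int_mono hx continuous_intros)
    ultimately show "dist (\<integral>y. h x' y \<partial>M) (\<integral>y. h x y \<partial>M) < e"
      using e by (simp add: int_add int_diff hx dist_real_def abs_le_iff)
  qed (rule d)
qed


lemma cont_fst: "continuous_on UNIV (f::'a \<Rightarrow> real) \<Longrightarrow> continuous_on UNIV (\<lambda>p::'a\<times>'a. f (fst p))"
  by (rule continuous_on_compose2[of UNIV f]) (auto intro: continuous_intros)

lemma cont_snd: "continuous_on UNIV (f::'a \<Rightarrow> real) \<Longrightarrow> continuous_on UNIV (\<lambda>p::'a\<times>'a. f (snd p))"
  by (rule continuous_on_compose2[of UNIV f]) (auto intro: continuous_intros)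

lemma cx: "continuous_on UNIV (\<lambda>x. c x y)"
proof -
  have "continuous_on UNIV ((\<lambda>p. c (fst p) (snd p)) \<circ> (\<lambda>x. (x, y)))"
    by (intro continuous_on_compose continuous_intros c_cont2[THEN continuous_on_subset]) auto
  then show ?thesis by (simp add: o_def)
qed

lemma cy: "continuous_on UNIV (\<lambda>y. c x y)"
  using cx[of x] by (simp add: c_sym[of x])

lemma Cm_ex: "\<exists>Cm. \<forall>x y. 0 \<le> c x y \<and> c x y \<le> Cm"
proof -
  obtain B where "\<forall>p. \<bar>c (fst p) (snd p)\<bar> \<le> B"
    using cont_bounded[OF compact_UNIV_prod[OF cpt] c_cont2] by blast
  then show ?thesis using c_nonneg by (metis abs_of_nonneg fst_conv snd_conv)
qed

lemma integrand_cont: "continuous_on UNIV f \<Longrightarrow> continuous_on UNIV (\<lambda>x. exp ((f x - c x y) / eps))"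
  using eps by (intro continuous_intros cx) auto

lemma Zf_pos: "continuous_on UNIV f \<Longrightarrow> 0 < Zf eps c f M y"
  unfolding Zf_def by (intro int_pos integrand_cont) auto

lemma Zf_cont: "continuous_on UNIV f \<Longrightarrow> continuous_on UNIV (Zf eps c f M)"
proof -
  assume fc: "continuous_on UNIV f"
  have "continuous_on UNIV (\<lambda>p::'a\<times>'a. exp ((f (snd p) - c (snd p) (fst p)) / eps))"
    using eps by (intro continuous_intros cont_snd fc c_cont2') auto
  then have "continuous_on UNIV (\<lambda>y. \<integral>x. exp ((f x - c x y) / eps) \<partial>M)"
    by (rule param_cont[where h="\<lambda>y x. exp ((f x - c x y) / eps)", simplified])
  then show ?thesis by (simp add: Zf_def[abs_def])
qed

lemma T_cont: "continuous_on UNIV f \<Longrightarrow> continuous_on UNIV (T_eps eps c f M)"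
proof -
  assume fc: "continuous_on UNIV f"
  have "continuous_on UNIV (\<lambda>y. - eps * ln (Zf eps c f M y))"
    using Zf_pos[OF fc] by (intro continuous_intros continuous_on_ln Zf_cont fc) (auto simp: less_le)
  then show ?thesis by (simp add: T_Zf[abs_def])
qed

lemma Zf_cmp:
  assumes fc: "continuous_on UNIV f" and gc: "continuous_on UNIV g"
    and h: "\<And>x. f x - c x y \<le> g x - c x y' + a"
  shows "Zf eps c f M y \<le> exp (a / eps) * Zf eps c g M y'"
proof -
  have "Zf eps c f M y \<le> (\<integral>x. exp (a / eps) * exp ((g x - c x y') / eps) \<partial>M)"
    unfolding Zf_def
  proof (intro int_mono integrand_cont fc continuous_intros cx gc)
    fix x
    have "(f x - c x y) / eps \<le> a / eps + (g x - c x y') / eps"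
      using h[of x] eps by (simp add: divide_right_mono add_divide_distrib[symmetric] add.commute)
    then show "exp ((f x - c x y) / eps) \<le> exp (a / eps) * exp ((g x - c x y') / eps)"
      by (simp add: exp_add[symmetric])
  qed
  then show ?thesis by (simp add: Zf_def)
qed

lemma T_cmp:
  assumes fc: "continuous_on UNIV f" and gc: "continuous_on UNIV g"
    and h: "\<And>x. f x - c x y \<le> g x - c x y' + a"
  shows "T_eps eps c g M y' \<le> T_eps eps c f M y + a"
proof -
  have "ln (Zf eps c f M y) \<le> ln (exp (a / eps) * Zf eps c g M y')"
    using Zf_cmp[OF fc gc h] Zf_pos[OF fc, of y] Zf_pos[OF gc, of y'] by simp
  also have "\<dots> = a / eps + ln (Zf eps c g M y')"
    using Zf_pos[OF gc, of y'] by (simp add: ln_mult)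
  finally have "eps * ln (Zf eps c f M y) \<le> eps * (a / eps + ln (Zf eps c g M y'))"
    using eps by simp
  then show ?thesis using eps by (simp add: T_Zf distrib_left)
qed

lemma T_lip:
  assumes fc: "continuous_on UNIV f" and gc: "continuous_on UNIV g"
    and h: "\<forall>x. \<bar>f x - g x\<bar> \<le> e"
  shows "\<bar>T_eps eps c f M y - T_eps eps c g M y\<bar> \<le> e"
proof -
  have "T_eps eps c g M y \<le> T_eps eps c f M y + e"
    by (rule T_cmp[OF fc gc]) (use h in \<open>smt (verit)\<close>)
  moreover have "T_eps eps c f M y \<le> T_eps eps c g M y + e"
    by (rule T_cmp[OF gc fc]) (use h in \<open>smt (verit)\<close>)
  ultimately show ?thesis by (simp add: abs_le_iff)
qed

lemma T_mod:
  assumes fc: "continuous_on UNIV f" and h: "\<forall>x. \<bar>c x y - c x y'\<bar> \<le> d"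
  shows "\<bar>T_eps eps c f M y - T_eps eps c f M y'\<bar> \<le> d"
proof -
  have "T_eps eps c f M y' \<le> T_eps eps c f M y + d"
    by (rule T_cmp[OF fc fc]) (use h in \<open>smt (verit)\<close>)
  moreover have "T_eps eps c f M y \<le> T_eps eps c f M y' + d"
    by (rule T_cmp[OF fc fc]) (use h in \<open>smt (verit)\<close>)
  ultimately show ?thesis by (simp add: abs_le_iff)
qed

lemma T_shift:
  assumes fc: "continuous_on UNIV f"
  shows "T_eps eps c (\<lambda>x. f x + k) M y = T_eps eps c f M y - k"
proof -
  have "Zf eps c (\<lambda>x. f x + k) M y = (\<integral>x. exp (k / eps) * exp ((f x - c x y) / eps) \<partial>M)"
    unfolding Zf_def
    by (intro Bochner_Integration.integral_cong refl)
      (simp add: exp_add[symmetric] add_divide_distrib[symmetric])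
  also have "\<dots> = exp (k / eps) * Zf eps c f M y" by (simp add: Zf_def)
  finally have "ln (Zf eps c (\<lambda>x. f x + k) M y) = k / eps + ln (Zf eps c f M y)"
    using Zf_pos[OF fc, of y] by (simp add: ln_mult)
  then show ?thesis using eps by (simp add: T_Zf distrib_left)
qed


lemma T_contract:
  assumes Cm: "\<forall>x y. 0 \<le> c x y \<and> c x y \<le> Cm"
    and fc: "continuous_on UNIV f" and gc: "continuous_on UNIV g"
    and D: "\<forall>x x'. (f x - g x) - (f x' - g x') \<le> D"
  shows "(T_eps eps c f M y - T_eps eps c g M y) - (T_eps eps c f M y' - T_eps eps c g M y')
         \<le> (1 - exp (- 2 * Cm / eps)) * D"
proof -
  define \<theta> where "\<theta> = exp (- 2 * Cm / eps)"
  define h where "h x = f x - g x" for x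
  have hc: "continuous_on UNIV h" unfolding h_def by (intro continuous_intros fc gc)
  obtain xm where xm: "\<And>x. h xm \<le> h x"
    using continuous_attains_inf[OF cpt _ hc] by auto
  define a where "a = h xm"
  have D0: "0 \<le> D" using D[rule_format, of xm xm] by simp
  have Cm0: "0 \<le> Cm" using Cm[rule_format, of xm xm] by linarith
  have t0: "0 < \<theta>" unfolding \<theta>_def by simp
  have t1: "\<theta> \<le> 1" unfolding \<theta>_def using Cm0 eps by simp
  define u where "u x = exp ((h x - a) / eps)" for x
  have uc: "continuous_on UNIV u" unfolding u_def using eps by (intro continuous_intros hc) auto
  have u1: "1 \<le> u x" for x unfolding u_def using xm[of x] eps by (simp add: a_def)
  have ur: "u x \<le> exp (D / eps)" for x
    unfolding u_def using D[rule_format, of x xm] eps by (simp add: a_def h_def divide_right_mono)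
  define w where "w z x = exp ((g x - c x z) / eps)" for z x
  have wc: "continuous_on UNIV (w z)" for z unfolding w_def by (rule integrand_cont[OF gc])
  have wp: "0 < w z x" for z x unfolding w_def by simp
  define Z where "Z z = (\<integral>x. w z x \<partial>M)" for z
  define A where "A z = (\<integral>x. w z x * u x \<partial>M)" for z
  have Zp: "0 < Z z" for z unfolding Z_def by (rule int_pos[OF wc wp])
  have ZZ: "Zf eps c g M z = Z z" for z by (simp add: Zf_def Z_def w_def)
  have ZA: "Zf eps c f M z = exp (a / eps) * A z" for z
  proof -
    have "Zf eps c f M z = (\<integral>x. exp (a / eps) * (w z x * u x) \<partial>M)"
      unfolding Zf_def
    proof (intro Bochner_Integration.integral_cong refl)
      fix x
      have "(f x - c x z) / eps = a / eps + ((g x - c x z) / eps + (h x - a) / eps)"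
        using eps by (simp add: h_def field_simps)
      then show "exp ((f x - c x z) / eps) = exp (a / eps) * (w z x * u x)"
        by (simp add: w_def u_def exp_add)
    qed
    then show ?thesis by (simp add: A_def)
  qed
  have AZ1: "Z z \<le> A z" for z unfolding Z_def A_def
    using u1 wp by (intro int_mono wc continuous_intros uc) (simp add: less_imp_le)
  have AZ2: "A z \<le> exp (D / eps) * Z z" for z
  proof -
    have "A z \<le> (\<integral>x. exp (D / eps) * w z x \<partial>M)" unfolding A_def
      using ur wp by (intro int_mono wc continuous_intros uc) (simp add: less_imp_le mult.commute)
    then show ?thesis by (simp add: Z_def)
  qed
  define E where "E z = A z / Z z" for z
  have E1: "1 \<le> E z" for z unfolding E_def using AZ1 Zp by simp
  have Er: "E z \<le> exp (D / eps)" for z unfolding E_def using AZ2 Zp by (simp add: divide_le_eq)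
  have Tdiff: "T_eps eps c f M z - T_eps eps c g M z = - a - eps * ln (E z)" for z
  proof -
    have Ap: "0 < A z" using AZ1 Zp by (metis order_less_le_trans)
    have "T_eps eps c f M z - T_eps eps c g M z
        = - eps * (a / eps + ln (A z)) + eps * ln (Z z)"
      using Ap eps by (simp add: T_Zf ZA ZZ ln_mult)
    also have "\<dots> = - a - eps * ln (E z)"
      using eps Ap Zp[of z] by (simp add: E_def ln_div algebra_simps)
    finally show ?thesis .
  qed
  \<comment> \<open>Doeblin minorisation\<close>
  have wmin: "exp (- Cm / eps) * w z' x \<le> w z x" for z z' x
  proof -
    have "(g x - c x z') - Cm \<le> g x - c x z" using Cm[rule_format, of x z] Cm[rule_format, of x z'] by linarith
    then have "((g x - c x z') - Cm) / eps \<le> (g x - c x z) / eps" using eps by (simp add: divide_right_mono)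
    then have "- Cm / eps + (g x - c x z') / eps \<le> (g x - c x z) / eps"
      by (simp add: diff_divide_distrib)
    then show ?thesis unfolding w_def by (simp add: exp_add[symmetric])
  qed
  have Zmin: "exp (- Cm / eps) * Z z' \<le> Z z" for z z'
  proof -
    have "(\<integral>x. exp (- Cm / eps) * w z' x \<partial>M) \<le> Z z" unfolding Z_def
      by (intro int_mono wc continuous_intros wmin)
    moreover have "(\<integral>x. exp (- Cm / eps) * w z' x \<partial>M) = exp (- Cm / eps) * Z z'"
      unfolding Z_def by (rule integral_mult_right_zero)
    ultimately show ?thesis by simp
  qed
  have dmin: "\<theta> * w y' x * Z y \<le> w y x * Z y'" for x
  proof -
    have "\<theta> * w y' x * Z y = (exp (- Cm / eps) * w y' x) * (exp (- Cm / eps) * Z y)"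
      unfolding \<theta>_def by (simp add: exp_add[symmetric] algebra_simps)
    also have "\<dots> \<le> w y x * Z y'"
      using wmin Zmin wp Zp by (intro mult_mono) (auto simp: less_imp_le)
    finally show ?thesis .
  qed
  have key: "\<theta> * Z y * (A y' - Z y') \<le> Z y' * (A y - Z y)"
  proof -
    have "(\<integral>x. (\<theta> * Z y) * (w y' x * u x - w y' x) \<partial>M) \<le> (\<integral>x. Z y' * (w y x * u x - w y x) \<partial>M)"
    proof (intro int_mono wc continuous_intros uc)
      fix x
      have "(\<theta> * w y' x * Z y) * (u x - 1) \<le> (w y x * Z y') * (u x - 1)"
        using dmin u1 by (intro mult_right_mono) auto
      then show "\<theta> * Z y * (w y' x * u x - w y' x) \<le> Z y' * (w y x * u x - w y x)"
        by (simp add: algebra_simps)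
    qed
    then show ?thesis
      by (simp add: int_diff wc uc continuous_intros A_def Z_def)
  qed
  have Ekey: "\<theta> * E y' + 1 - \<theta> \<le> E y"
  proof -
    have "\<theta> * (A y' / Z y' - 1) \<le> A y / Z y - 1"
      using key Zp[of y] Zp[of y'] by (simp add: field_simps)
    then show ?thesis unfolding E_def by (simp add: algebra_simps)
  qed
  have cv: "E y' \<le> exp ((1 - \<theta>) * (D / eps)) * (\<theta> * E y' + 1 - \<theta>)"
    using D0 eps t0 t1 E1 Er by (intro conv_ineq) auto
  have pos: "0 < \<theta> * E y' + 1 - \<theta>" using t0 t1 E1[of y'] by (smt (verit) mult_le_cancel_left1)
  have "E y' \<le> exp ((1 - \<theta>) * (D / eps)) * E y"
    using cv Ekey by (meson exp_gt_zero less_imp_le mult_left_mono order_trans)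
  then have "ln (E y') \<le> ln (exp ((1 - \<theta>) * (D / eps)) * E y)"
    using E1 by (simp add: order_less_le_trans[OF zero_less_one])
  also have "\<dots> = (1 - \<theta>) * (D / eps) + ln (E y)"
    using E1[of y] by (simp add: ln_mult)
  finally have "eps * ln (E y') \<le> eps * ((1 - \<theta>) * (D / eps) + ln (E y))"
    using eps by simp
  moreover have "eps * ((1 - \<theta>) * (D / eps) + ln (E y)) = (1 - \<theta>) * D + eps * ln (E y)"
    using eps by (simp add: distrib_left)
  ultimately have "eps * ln (E y') - eps * ln (E y) \<le> (1 - \<theta>) * D"
    by linarith
  then show ?thesis unfolding Tdiff \<theta>_def by simp
qed


lemma expT: "continuous_on UNIV f \<Longrightarrow> exp (T_eps eps c f M y / eps) * Zf eps c f M y = 1"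
proof -
  assume fc: "continuous_on UNIV f"
  have "T_eps eps c f M y / eps = - ln (Zf eps c f M y)" using eps by (simp add: T_Zf)
  then show ?thesis using Zf_pos[OF fc, of y] by (simp add: exp_minus field_simps)
qed

lemma kern:
  assumes fc: "continuous_on UNIV f" and Cm: "\<forall>x y. 0 \<le> c x y \<and> c x y \<le> Cm"
  shows "continuous_on UNIV (\<lambda>p::'a\<times>'a. exp ((T_eps eps c f M (fst p) + f (snd p) - c (fst p) (snd p)) / eps))"
    and "(\<integral>x. exp ((T_eps eps c f M y + f x - c y x) / eps) \<partial>M) = 1"
    and "\<theta>c eps Cm * exp ((T_eps eps c f M y' + f x - c y' x) / eps)
           \<le> exp ((T_eps eps c f M y + f x - c y x) / eps)"
proof -
  show "continuous_on UNIV (\<lambda>p::'a\<times>'a. exp ((T_eps eps c f M (fst p) + f (snd p) - c (fst p) (snd p)) / eps))"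
    using eps by (intro continuous_intros cont_fst cont_snd T_cont fc c_cont2) auto
  have pt: "exp ((T_eps eps c f M y + f x - c y x) / eps) = exp (T_eps eps c f M y / eps) * exp ((f x - c x y) / eps)" for x
  proof -
    have "(T_eps eps c f M y + f x - c y x) / eps = T_eps eps c f M y / eps + (f x - c x y) / eps"
      by (simp add: c_sym[of y x] add_divide_distrib[symmetric])
    then show ?thesis by (simp add: exp_add[symmetric])
  qed
  have "(\<integral>x. exp ((T_eps eps c f M y + f x - c y x) / eps) \<partial>M)
      = (\<integral>x. exp (T_eps eps c f M y / eps) * exp ((f x - c x y) / eps) \<partial>M)"
    by (simp only: pt)
  also have "\<dots> = exp (T_eps eps c f M y / eps) * Zf eps c f M y" by (simp add: Zf_def)
  also have "\<dots> = 1" by (rule expT[OF fc])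
  finally show "(\<integral>x. exp ((T_eps eps c f M y + f x - c y x) / eps) \<partial>M) = 1" .
  have cb: "\<forall>z. \<bar>c z y - c z y'\<bar> \<le> Cm"
  proof
    fix z show "\<bar>c z y - c z y'\<bar> \<le> Cm" using Cm[rule_format, of z y] Cm[rule_format, of z y'] by linarith
  qed
  have Tm: "\<bar>T_eps eps c f M y - T_eps eps c f M y'\<bar> \<le> Cm" by (rule T_mod[OF fc cb])
  have "T_eps eps c f M y' + f x - c y' x - 2 * Cm \<le> T_eps eps c f M y + f x - c y x"
    using Tm Cm[rule_format, of y x] Cm[rule_format, of y' x] by linarith
  then have "(T_eps eps c f M y' + f x - c y' x - 2 * Cm) / eps \<le> (T_eps eps c f M y + f x - c y x) / eps"
    using eps by (simp add: divide_right_mono)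
  then have "- 2 * Cm / eps + (T_eps eps c f M y' + f x - c y' x) / eps \<le> (T_eps eps c f M y + f x - c y x) / eps"
    by (simp add: diff_divide_distrib add_divide_distrib)
  then show "\<theta>c eps Cm * exp ((T_eps eps c f M y' + f x - c y' x) / eps)
           \<le> exp ((T_eps eps c f M y + f x - c y x) / eps)"
    unfolding \<theta>c_def by (simp add: exp_add[symmetric])
qed

context
  fixes q :: "'a \<Rightarrow> 'a \<Rightarrow> real" and \<theta> :: real
  assumes qc: "continuous_on UNIV (\<lambda>p::'a\<times>'a. q (fst p) (snd p))"
    and qpos: "\<And>x y. 0 < q x y"
    and qint: "\<And>x. (\<integral>y. q x y \<partial>M) = 1"
    and qd: "\<And>x x' y. \<theta> * q x' y \<le> q x y"
    and t0: "0 \<le> \<theta>"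
begin

lemma qy_cont: "continuous_on UNIV (q x)"
proof -
  have "continuous_on UNIV ((\<lambda>p. q (fst p) (snd p)) \<circ> (\<lambda>y. (x, y)))"
    by (intro continuous_on_compose continuous_intros qc[THEN continuous_on_subset]) auto
  then show ?thesis by (simp add: o_def)
qed

lemma qphi_cont: "continuous_on UNIV \<phi> \<Longrightarrow> continuous_on UNIV (\<lambda>y. q x y * \<phi> y)"
  by (intro continuous_intros qy_cont)

lemma t1: "\<theta> \<le> 1"
proof -
  obtain x :: 'a where True by blast
  have "(\<integral>y. \<theta> * q x y \<partial>M) \<le> (\<integral>y. q x y \<partial>M)"
    using qd by (intro int_mono continuous_intros qy_cont)
  then show ?thesis by (simp add: qint)
qed

lemma Q_cont: "continuous_on UNIV \<phi> \<Longrightarrow> continuous_on UNIV (Qop M q \<phi>)"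
proof -
  assume pc: "continuous_on UNIV \<phi>"
  have "continuous_on UNIV (\<lambda>p::'a\<times>'a. q (fst p) (snd p) * \<phi> (snd p))"
    by (intro continuous_intros qc cont_snd pc)
  then have "continuous_on UNIV (\<lambda>x. \<integral>y. q x y * \<phi> y \<partial>M)"
    by (rule param_cont[where h="\<lambda>x y. q x y * \<phi> y", simplified])
  then show ?thesis by (simp add: Qop_def[abs_def])
qed

lemma Q_lin:
  assumes pc: "continuous_on UNIV \<phi>" and sc: "continuous_on UNIV \<psi>"
  shows "Qop M q (\<lambda>y. a * \<phi> y + b * \<psi> y) x = a * Qop M q \<phi> x + b * Qop M q \<psi> x"
proof -
  have "Qop M q (\<lambda>y. a * \<phi> y + b * \<psi> y) x = (\<integral>y. a * (q x y * \<phi> y) + b * (q x y * \<psi> y) \<partial>M)"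
    unfolding Qop_def by (intro Bochner_Integration.integral_cong refl) (simp add: algebra_simps)
  also have "\<dots> = (\<integral>y. a * (q x y * \<phi> y) \<partial>M) + (\<integral>y. b * (q x y * \<psi> y) \<partial>M)"
    by (intro int_add continuous_intros qphi_cont pc sc)
  also have "\<dots> = a * Qop M q \<phi> x + b * Qop M q \<psi> x"
    by (simp add: Qop_def)
  finally show ?thesis .
qed

lemma Q_shift:
  assumes pc: "continuous_on UNIV \<phi>"
  shows "Qop M q (\<lambda>y. \<phi> y + k) x = Qop M q \<phi> x + k"
proof -
  have "Qop M q (\<lambda>y. \<phi> y + k) x = (\<integral>y. q x y * \<phi> y + k * q x y \<partial>M)"
    unfolding Qop_def by (intro Bochner_Integration.integral_cong refl) (simp add: algebra_simps)
  also have "\<dots> = (\<integral>y. q x y * \<phi> y \<partial>M) + (\<integral>y. k * q x y \<partial>M)"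
    by (intro int_add continuous_intros qphi_cont pc qy_cont)
  also have "\<dots> = Qop M q \<phi> x + k"
    by (simp add: Qop_def qint)
  finally show ?thesis .
qed

lemma Q_lower:
  assumes pc: "continuous_on UNIV \<phi>" and lo: "\<And>y. a \<le> \<phi> y"
  shows "a \<le> Qop M q \<phi> x"
proof -
  have "(\<integral>y. a * q x y \<partial>M) \<le> (\<integral>y. q x y * \<phi> y \<partial>M)"
    using lo qpos by (intro int_mono continuous_intros qphi_cont pc qy_cont)
      (simp add: mult.commute less_imp_le mult_left_mono)
  then show ?thesis by (simp add: Qop_def qint)
qed

lemma Q_upper:
  assumes pc: "continuous_on UNIV \<phi>" and up: "\<And>y. \<phi> y \<le> a"
  shows "Qop M q \<phi> x \<le> a"
proof -
  have "(\<integral>y. q x y * \<phi> y \<partial>M) \<le> (\<integral>y. a * q x y \<partial>M)"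
    using up qpos by (intro int_mono continuous_intros qphi_cont pc qy_cont)
      (simp add: mult.commute less_imp_le mult_left_mono)
  then show ?thesis by (simp add: Qop_def qint)
qed

lemma Q_diff:
  assumes pc: "continuous_on UNIV \<phi>" and sc: "continuous_on UNIV \<psi>"
  shows "Qop M q (\<lambda>y. \<phi> y - \<psi> y) x = Qop M q \<phi> x - Qop M q \<psi> x"
proof -
  have "(\<lambda>y. \<phi> y - \<psi> y) = (\<lambda>y. 1 * \<phi> y + (- 1) * \<psi> y)" by simp
  then show ?thesis using Q_lin[OF pc sc, of 1 "- 1" x] by simp
qed

lemma Q_absbound:
  assumes pc: "continuous_on UNIV \<phi>" and b: "\<And>y. \<bar>\<phi> y\<bar> \<le> e"
  shows "\<bar>Qop M q \<phi> x\<bar> \<le> e"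
proof -
  have b1: "- e \<le> \<phi> y" for y using abs_le_D2[OF b[of y]] by linarith
  have b2: "\<phi> y \<le> e" for y using abs_le_D1[OF b[of y]] by linarith
  have "- e \<le> Qop M q \<phi> x" by (rule Q_lower[OF pc b1])
  moreover have "Qop M q \<phi> x \<le> e" by (rule Q_upper[OF pc b2])
  ultimately show ?thesis by (simp add: abs_le_iff)
qed

lemma Q_contr:
  assumes pc: "continuous_on UNIV \<phi>" and D: "\<forall>y y'. \<phi> y - \<phi> y' \<le> D"
  shows "Qop M q \<phi> x - Qop M q \<phi> x' \<le> (1 - \<theta>) * D"
proof -
  obtain ym where ym: "\<And>y. \<phi> ym \<le> \<phi> y"
    using continuous_attains_inf[OF cpt _ pc] by auto
  define a where "a = \<phi> ym"
  have up: "\<phi> y \<le> a + D" for y using D[rule_format, of y ym] by (simp add: a_def)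
  have ident: "(\<integral>y. q z y * (a + D - \<phi> y) \<partial>M) = (a + D) - Qop M q \<phi> z" for z
  proof -
    have "(\<integral>y. q z y * (a + D - \<phi> y) \<partial>M) = (\<integral>y. (a + D) * q z y - q z y * \<phi> y \<partial>M)"
      by (intro Bochner_Integration.integral_cong refl) (simp add: algebra_simps)
    also have "\<dots> = (\<integral>y. (a + D) * q z y \<partial>M) - (\<integral>y. q z y * \<phi> y \<partial>M)"
      by (intro int_diff continuous_intros qphi_cont pc qy_cont)
    also have "\<dots> = (a + D) - Qop M q \<phi> z" by (simp add: Qop_def qint)
    finally show ?thesis .
  qed
  have "(\<integral>y. \<theta> * (q x' y * (a + D - \<phi> y)) \<partial>M) \<le> (\<integral>y. q x y * (a + D - \<phi> y) \<partial>M)"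
  proof (intro int_mono continuous_intros qy_cont pc)
    fix y
    have "(\<theta> * q x' y) * (a + D - \<phi> y) \<le> q x y * (a + D - \<phi> y)"
      using qd up[of y] by (intro mult_right_mono) auto
    then show "\<theta> * (q x' y * (a + D - \<phi> y)) \<le> q x y * (a + D - \<phi> y)" by (simp add: mult.assoc)
  qed
  then have "\<theta> * ((a + D) - Qop M q \<phi> x') \<le> (a + D) - Qop M q \<phi> x"
    by (simp add: ident)
  moreover have "a \<le> Qop M q \<phi> x'" by (rule Q_lower[OF pc]) (simp add: a_def ym)
  moreover have "0 \<le> 1 - \<theta>" using t1 by simp
  ultimately have "(1 - \<theta>) * a \<le> (1 - \<theta>) * Qop M q \<phi> x'
      \<and> \<theta> * ((a + D) - Qop M q \<phi> x') \<le> (a + D) - Qop M q \<phi> x"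
    by (simp add: mult_left_mono)
  then show ?thesis by (simp add: algebra_simps)
qed

end

end


locale sk2 = m: sk eps c \<mu> + n: sk eps c \<nu> for eps c and \<mu> \<nu> :: "'a::metric_space measure"
begin

lemma mass:
  fixes a :: "'a \<Rightarrow> 'a \<Rightarrow> real"
  assumes ac: "continuous_on UNIV (\<lambda>p::'a\<times>'a. a (fst p) (snd p))"
    and a1: "\<And>y. (\<integral>x. a x y \<partial>\<mu>) = 1"
    and a2: "\<And>x. (\<integral>y. a x y \<partial>\<nu>) = l"
  shows "l = 1"
proof -
  have ax: "continuous_on UNIV (\<lambda>x. a x y)" for y
  proof -
    have "continuous_on UNIV ((\<lambda>p. a (fst p) (snd p)) \<circ> (\<lambda>x. (x, y)))"
      by (intro continuous_on_compose continuous_intros ac[THEN continuous_on_subset]) auto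
    then show ?thesis by (simp add: o_def)
  qed
  have ay: "continuous_on UNIV (a x)" for x
  proof -
    have "continuous_on UNIV ((\<lambda>p. a (fst p) (snd p)) \<circ> (\<lambda>y. (x, y)))"
      by (intro continuous_on_compose continuous_intros ac[THEN continuous_on_subset]) auto
    then show ?thesis by (simp add: o_def)
  qed
  have main: "\<bar>l - 1\<bar> \<le> \<eta>" if \<eta>: "\<eta> > 0" for \<eta>
  proof -
    have uc: "uniformly_continuous_on UNIV (\<lambda>p::'a\<times>'a. a (fst p) (snd p))"
      by (rule compact_uniformly_continuous[OF ac compact_UNIV_prod[OF m.cpt]])
    obtain d where d: "d > 0" and dd: "\<And>p p'. dist p' p < d \<Longrightarrow>
        dist (a (fst p') (snd p')) (a (fst p) (snd p)) < \<eta>"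
      using uc[unfolded uniformly_continuous_on_def, rule_format, of \<eta>] \<eta> by auto
    have cov: "UNIV \<subseteq> (\<Union>z\<in>UNIV. ball z d)"
      using d by (metis UNIV_I UN_I centre_in_ball subsetI)
    obtain Z :: "'a set" where Zs: "Z \<subseteq> UNIV" and Zf: "finite Z" and Zc: "UNIV \<subseteq> (\<Union>z\<in>Z. ball z d)"
      by (rule compactE_image[OF m.cpt _ cov]) auto
    define w :: "'a \<Rightarrow> 'a \<Rightarrow> real" where "w z x = max 0 (d - dist x z)" for z x
    define W where "W x = (\<Sum>z\<in>Z. w z x)" for x
    define p where "p z x = w z x / W x" for z x
    have w0: "0 \<le> w z x" for z x by (simp add: w_def)
    have Wp: "0 < W x" for x
    proof -
      obtain z where z: "z \<in> Z" "x \<in> ball z d" using Zc by blast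
      then have "0 < w z x" by (simp add: w_def dist_commute)
      moreover have "w z x \<le> W x" unfolding W_def
        by (rule member_le_sum[OF z(1) _ Zf]) (simp add: w0)
      ultimately show ?thesis by simp
    qed
    have wc: "continuous_on UNIV (w z)" for z
      unfolding w_def[abs_def] by (intro continuous_intros)
    have Wc: "continuous_on UNIV W" unfolding W_def[abs_def] by (intro continuous_intros wc)
    have pc: "continuous_on UNIV (p z)" for z
      unfolding p_def[abs_def] using Wp by (intro continuous_intros wc Wc) (auto simp: less_imp_neq[symmetric])
    have p0: "0 \<le> p z x" for z x unfolding p_def using w0 Wp by (simp add: less_imp_le)
    have psum: "(\<Sum>z\<in>Z. p z x) = 1" for x
      unfolding p_def using Wp[of x] by (simp add: sum_divide_distrib[symmetric] W_def)
    have pclose: "p z x * \<bar>a z y - a x y\<bar> \<le> p z x * \<eta>" for z x y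
    proof (cases "p z x = 0")
      case True then show ?thesis by simp
    next
      case False
      then have "w z x \<noteq> 0" by (simp add: p_def)
      then have "dist x z < d" by (simp add: w_def max_def split: if_splits)
      then have "dist (z, y) (x, y) < d" by (simp add: dist_Pair_Pair dist_commute)
      then have "\<bar>a z y - a x y\<bar> < \<eta>" using dd[of "(x, y)" "(z, y)"] by (simp add: dist_real_def dist_commute abs_minus_commute)
      then show ?thesis using p0 by (intro mult_left_mono) auto
    qed
    define sx where "sx x y = (\<Sum>z\<in>Z. p z x * a z y)" for x y
    have sxc: "continuous_on UNIV (\<lambda>x. sx x y)" for y
      unfolding sx_def by (intro continuous_intros pc)
    have sx_close: "\<bar>sx x y - a x y\<bar> \<le> \<eta>" for x y
    proof -
      have ax_eq: "a x y = (\<Sum>z\<in>Z. p z x * a x y)"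
        using psum[of x] by (simp add: sum_distrib_right[symmetric])
      have "sx x y - a x y = (\<Sum>z\<in>Z. p z x * a z y) - (\<Sum>z\<in>Z. p z x * a x y)"
        unfolding sx_def using ax_eq by simp
      also have "\<dots> = (\<Sum>z\<in>Z. p z x * a z y - p z x * a x y)"
        by (rule sum_subtractf[symmetric])
      also have "\<dots> = (\<Sum>z\<in>Z. p z x * (a z y - a x y))"
        by (simp add: right_diff_distrib)
      finally have "sx x y - a x y = (\<Sum>z\<in>Z. p z x * (a z y - a x y))" .
      then have "\<bar>sx x y - a x y\<bar> \<le> (\<Sum>z\<in>Z. \<bar>p z x * (a z y - a x y)\<bar>)"
        by (simp add: sum_abs)
      also have "\<dots> \<le> (\<Sum>z\<in>Z. p z x * \<eta>)"
        by (intro sum_mono) (simp add: abs_mult p0 pclose)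
      also have "\<dots> = \<eta>" using psum[of x] by (simp add: sum_distrib_right[symmetric])
      finally show ?thesis .
    qed
    define s where "s y = (\<Sum>z\<in>Z. (\<integral>x. p z x \<partial>\<mu>) * a z y)" for y
    have s_eq: "s y = (\<integral>x. sx x y \<partial>\<mu>)" for y
    proof -
      have "(\<integral>x. sx x y \<partial>\<mu>) = (\<Sum>z\<in>Z. (\<integral>x. p z x * a z y \<partial>\<mu>))"
        unfolding sx_def by (intro Bochner_Integration.integral_sum m.integ continuous_intros pc)
      also have "\<dots> = s y" by (simp add: s_def)
      finally show ?thesis by simp
    qed
    have s_bd: "1 - \<eta> \<le> s y \<and> s y \<le> 1 + \<eta>" for y
    proof -
      have "(\<integral>x. a x y - \<eta> \<partial>\<mu>) \<le> (\<integral>x. sx x y \<partial>\<mu>)"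
        using sx_close by (intro m.int_mono continuous_intros ax sxc) (smt (verit))
      moreover have "(\<integral>x. sx x y \<partial>\<mu>) \<le> (\<integral>x. a x y + \<eta> \<partial>\<mu>)"
        using sx_close by (intro m.int_mono continuous_intros ax sxc) (smt (verit))
      ultimately show ?thesis
        by (simp add: s_eq m.int_diff m.int_add ax a1)
    qed
    have sc: "continuous_on UNIV s" unfolding s_def[abs_def] by (intro continuous_intros ay)
    have "(\<integral>y. s y \<partial>\<nu>) = (\<Sum>z\<in>Z. (\<integral>y. (\<integral>x. p z x \<partial>\<mu>) * a z y \<partial>\<nu>))"
      unfolding s_def by (intro Bochner_Integration.integral_sum n.integ continuous_intros ay)
    also have "\<dots> = (\<Sum>z\<in>Z. (\<integral>x. p z x \<partial>\<mu>) * l)" by (simp add: a2)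
    also have "\<dots> = (\<integral>x. (\<Sum>z\<in>Z. p z x) \<partial>\<mu>) * l"
      by (simp add: sum_distrib_right[symmetric] Bochner_Integration.integral_sum m.integ pc)
    also have "\<dots> = l" by (simp add: psum)
    finally have sl: "(\<integral>y. s y \<partial>\<nu>) = l" .
    have "1 - \<eta> \<le> (\<integral>y. s y \<partial>\<nu>)" using s_bd by (intro n.int_lower sc) blast
    moreover have "(\<integral>y. s y \<partial>\<nu>) \<le> 1 + \<eta>" using s_bd by (intro n.int_upper sc) blast
    ultimately show ?thesis using sl by (simp add: abs_le_iff)
  qed
  show ?thesis
  proof (rule ccontr)
    assume "l \<noteq> 1"
    then have "\<bar>l - 1\<bar> / 2 > 0" by simp
    from main[OF this] show False using \<open>\<bar>l - 1\<bar> / 2 > 0\<close> by simp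
  qed
qed


lemma theta_bounds: "\<forall>x y. 0 \<le> c x y \<and> c x y \<le> Cm \<Longrightarrow> 0 < \<theta>c eps Cm \<and> \<theta>c eps Cm \<le> 1"
proof -
  assume Cm: "\<forall>x y. 0 \<le> c x y \<and> c x y \<le> Cm"
  obtain x :: 'a where True by blast
  have "0 \<le> Cm" using Cm[rule_format, of x x] by linarith
  then show ?thesis using m.eps by (simp add: \<theta>c_def)
qed

lemma F_contr:
  assumes Cm: "\<forall>x y. 0 \<le> c x y \<and> c x y \<le> Cm"
    and fc: "continuous_on UNIV f" and gc: "continuous_on UNIV g"
    and D: "\<forall>x x'. (f x - g x) - (f x' - g x') \<le> D"
  shows "\<forall>x x'. (T_eps eps c (T_eps eps c f \<mu>) \<nu> x - T_eps eps c (T_eps eps c g \<mu>) \<nu> x)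
     - (T_eps eps c (T_eps eps c f \<mu>) \<nu> x' - T_eps eps c (T_eps eps c g \<mu>) \<nu> x') \<le> (1 - \<theta>c eps Cm)^2 * D"
proof -
  have 1: "\<forall>y y'. (T_eps eps c f \<mu> y - T_eps eps c g \<mu> y) - (T_eps eps c f \<mu> y' - T_eps eps c g \<mu> y')
      \<le> (1 - \<theta>c eps Cm) * D"
    using m.T_contract[OF Cm fc gc D] by (simp add: \<theta>c_def)
  show ?thesis
    using n.T_contract[OF Cm m.T_cont[OF fc] m.T_cont[OF gc] 1]
    by (simp add: \<theta>c_def power2_eq_square mult.assoc)
qed

lemma F_lip:
  assumes fc: "continuous_on UNIV f" and gc: "continuous_on UNIV g"
    and e: "\<forall>x. \<bar>f x - g x\<bar> \<le> e"
  shows "\<forall>x. \<bar>T_eps eps c (T_eps eps c f \<mu>) \<nu> x - T_eps eps c (T_eps eps c g \<mu>) \<nu> x\<bar> \<le> e"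
proof -
  have "\<forall>y. \<bar>T_eps eps c f \<mu> y - T_eps eps c g \<mu> y\<bar> \<le> e"
    using m.T_lip[OF fc gc e] by blast
  then show ?thesis using n.T_lip[OF m.T_cont[OF fc] m.T_cont[OF gc]] by blast
qed

lemma SP_exists: "\<exists>p. SPred eps c \<mu> \<nu> p"
proof -
  obtain Cm where Cm: "\<forall>x y. 0 \<le> c x y \<and> c x y \<le> Cm" using m.Cm_ex by blast
  define F where "F f = T_eps eps c (T_eps eps c f \<mu>) \<nu>" for f
  have tb: "0 < \<theta>c eps Cm" "\<theta>c eps Cm \<le> 1" using theta_bounds[OF Cm] by auto
  have "\<exists>f k. continuous_on UNIV f \<and> (\<forall>x. F f x = f x + k)"
  proof (rule fix_mod_const[OF m.cpt, where \<kappa>="(1 - \<theta>c eps Cm)^2"])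
    show "continuous_on UNIV (F f)" if "continuous_on UNIV f" for f
      unfolding F_def by (intro n.T_cont m.T_cont that)
    show "\<forall>x x'. (F f x - F g x) - (F f x' - F g x') \<le> (1 - \<theta>c eps Cm)^2 * D"
      if "continuous_on UNIV f" "continuous_on UNIV g" "\<forall>x x'. (f x - g x) - (f x' - g x') \<le> D"
      for f g D unfolding F_def by (rule F_contr[OF Cm that])
    show "\<forall>x. \<bar>F f x - F g x\<bar> \<le> e"
      if "continuous_on UNIV f" "continuous_on UNIV g" "\<forall>x. \<bar>f x - g x\<bar> \<le> e"
      for f g e unfolding F_def by (rule F_lip[OF that])
    show "0 \<le> (1 - \<theta>c eps Cm)^2" by simp
    show "(1 - \<theta>c eps Cm)^2 < 1" using tb by (rule sq_lt1)
  qed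
  then obtain f k where fc: "continuous_on UNIV f" and fk: "\<And>x. F f x = f x + k" by blast
  define g where "g = T_eps eps c f \<mu>"
  have gc: "continuous_on UNIV g" unfolding g_def by (rule m.T_cont[OF fc])
  have Tg: "T_eps eps c g \<nu> x = f x + k" for x using fk[of x] by (simp add: F_def g_def)
  define a where "a x y = exp ((f x + g y - c x y) / eps)" for x y
  have ac: "continuous_on UNIV (\<lambda>p::'a\<times>'a. a (fst p) (snd p))"
    unfolding a_def using m.eps by (intro continuous_intros m.cont_fst m.cont_snd fc gc m.c_cont2) auto
  have a1: "(\<integral>x. a x y \<partial>\<mu>) = 1" for y
  proof -
    have "(\<integral>x. a x y \<partial>\<mu>) = (\<integral>x. exp (g y / eps) * exp ((f x - c x y) / eps) \<partial>\<mu>)"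
      unfolding a_def by (intro Bochner_Integration.integral_cong refl)
        (simp add: exp_add[symmetric] add_divide_distrib[symmetric])
    also have "\<dots> = exp (g y / eps) * Zf eps c f \<mu> y" by (simp add: Zf_def)
    also have "\<dots> = 1" unfolding g_def by (rule m.expT[OF fc])
    finally show ?thesis .
  qed
  have a2: "(\<integral>y. a x y \<partial>\<nu>) = exp (- k / eps)" for x
  proof -
    have pt: "a x y = exp (f x / eps) * exp ((g y - c y x) / eps)" for y
    proof -
      have "(f x + g y - c x y) / eps = f x / eps + (g y - c y x) / eps"
        by (simp add: m.c_sym[of x y] add_divide_distrib[symmetric])
      then show ?thesis unfolding a_def by (simp add: exp_add[symmetric])
    qed
    have "(\<integral>y. a x y \<partial>\<nu>) = (\<integral>y. exp (f x / eps) * exp ((g y - c y x) / eps) \<partial>\<nu>)"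
      by (simp only: pt)
    also have "\<dots> = exp (f x / eps) * Zf eps c g \<nu> x" by (simp add: Zf_def)
    also have "exp (f x / eps) = exp (- k / eps) * exp (T_eps eps c g \<nu> x / eps)"
    proof -
      have "- k / eps + T_eps eps c g \<nu> x / eps = f x / eps"
        unfolding Tg by (simp add: diff_divide_distrib[symmetric])
      then show ?thesis by (simp add: exp_add[symmetric])
    qed
    also have "exp (- k / eps) * exp (T_eps eps c g \<nu> x / eps) * Zf eps c g \<nu> x
        = exp (- k / eps) * (exp (T_eps eps c g \<nu> x / eps) * Zf eps c g \<nu> x)"
      by (simp only: mult.assoc)
    also have "\<dots> = exp (- k / eps)" by (simp only: n.expT[OF gc] mult_1_right)
    finally show ?thesis .
  qed
  have "exp (- k / eps) = 1" by (rule mass[OF ac a1 a2])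
  then have k0: "k = 0" using m.eps by simp
  define t where "t = ((\<integral>y. g y \<partial>\<nu>) - (\<integral>x. f x \<partial>\<mu>)) / 2"
  define p where "p = ((\<lambda>x. f x + t), (\<lambda>y. g y + (- t)))"
  have "SPred eps c \<mu> \<nu> p"
    unfolding SPred_def p_def fst_conv snd_conv
  proof (intro conjI)
    show "continuous_on UNIV (\<lambda>x. f x + t)" by (intro continuous_intros fc)
    show "continuous_on UNIV (\<lambda>y. g y + - t)" by (intro continuous_intros gc)
    show "(\<lambda>x. f x + t) = T_eps eps c (\<lambda>y. g y + - t) \<nu>"
    proof (rule ext)
      fix x
      have "T_eps eps c (\<lambda>y. g y + - t) \<nu> x = T_eps eps c g \<nu> x - (- t)" by (rule n.T_shift[OF gc])
      then show "f x + t = T_eps eps c (\<lambda>y. g y + - t) \<nu> x" using Tg[of x] k0 by simp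
    qed
    show "(\<lambda>y. g y + - t) = T_eps eps c (\<lambda>x. f x + t) \<mu>"
    proof (rule ext)
      fix y
      have "T_eps eps c (\<lambda>x. f x + t) \<mu> y = T_eps eps c f \<mu> y - t" by (rule m.T_shift[OF fc])
      then show "g y + - t = T_eps eps c (\<lambda>x. f x + t) \<mu> y" by (simp add: g_def)
    qed
    have 1: "(\<integral>x. f x + t \<partial>\<mu>) = (\<integral>x. f x \<partial>\<mu>) + t"
      using m.int_add[OF fc continuous_on_const, of t] by simp
    have 2: "(\<integral>y. g y + - t \<partial>\<nu>) = (\<integral>y. g y \<partial>\<nu>) - t"
      using n.int_add[OF gc continuous_on_const, of "- t"] by simp
    have 3: "(\<integral>x. f x \<partial>\<mu>) + t = (\<integral>y. g y \<partial>\<nu>) - t"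
      unfolding t_def by (simp add: field_simps)
    show "(\<integral>x. f x + t \<partial>\<mu>) = (\<integral>y. g y + - t \<partial>\<nu>)"
      by (simp only: 1 2 3)
  qed
  then show ?thesis by blast
qed

lemma SP_unique:
  assumes p: "SPred eps c \<mu> \<nu> p" and p': "SPred eps c \<mu> \<nu> p'"
  shows "p = p'"
proof -
  obtain Cm where Cm: "\<forall>x y. 0 \<le> c x y \<and> c x y \<le> Cm" using m.Cm_ex by blast
  have tb: "0 < \<theta>c eps Cm" "\<theta>c eps Cm \<le> 1" using theta_bounds[OF Cm] by auto
  define f where "f = fst p" define g where "g = snd p"
  define f' where "f' = fst p'" define g' where "g' = snd p'"
  have fc: "continuous_on UNIV f" and gc: "continuous_on UNIV g"
    and fT: "f = T_eps eps c g \<nu>" and gT: "g = T_eps eps c f \<mu>" and fgi: "(\<integral>x. f x \<partial>\<mu>) = (\<integral>x. g x \<partial>\<nu>)"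
    unfolding f_def g_def using p[unfolded SPred_def] by blast+
  have fc': "continuous_on UNIV f'" and gc': "continuous_on UNIV g'"
    and fT': "f' = T_eps eps c g' \<nu>" and gT': "g' = T_eps eps c f' \<mu>" and fgi': "(\<integral>x. f' x \<partial>\<mu>) = (\<integral>x. g' x \<partial>\<nu>)"
    unfolding f'_def g'_def using p'[unfolded SPred_def] by blast+
  have Ff: "T_eps eps c (T_eps eps c f \<mu>) \<nu> = f" by (simp only: gT[symmetric] fT[symmetric])
  have Ff': "T_eps eps c (T_eps eps c f' \<mu>) \<nu> = f'" by (simp only: gT'[symmetric] fT'[symmetric])
  define h where "h x = f x - f' x" for x
  have hc: "continuous_on UNIV h" unfolding h_def by (intro continuous_intros fc fc')
  have k1: "(1 - \<theta>c eps Cm)^2 < 1" using tb by (rule sq_lt1)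
  obtain x0 :: 'a where True by blast
  have hconst: "h x = h x0" for x
  proof (rule osc_zero[OF m.cpt hc k1])
    fix D assume "\<forall>x x'. h x - h x' \<le> D"
    then have "\<forall>x x'. (f x - f' x) - (f x' - f' x') \<le> D" by (simp add: h_def)
    from F_contr[OF Cm fc fc' this] show "\<forall>x x'. h x - h x' \<le> (1 - \<theta>c eps Cm)^2 * D"
      by (simp add: Ff Ff' h_def)
  qed
  define k where "k = h x0"
  have fk: "f = (\<lambda>x. f' x + k)" using hconst by (auto simp: h_def k_def fun_eq_iff algebra_simps)
  have gk: "g = (\<lambda>y. g' y - k)" unfolding gT gT' fk by (rule ext) (simp add: m.T_shift[OF fc'])
  have "(\<integral>x. f' x + k \<partial>\<mu>) = (\<integral>y. g' y - k \<partial>\<nu>)" using fgi unfolding fk gk .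
  then have "k = 0" using fgi' by (simp add: m.int_add n.int_diff fc' gc')
  then have "f = f'" "g = g'" using fk gk by auto
  then show ?thesis by (simp add: f_def f'_def g_def g'_def prod_eq_iff)
qed

lemma SP_the: "SPred eps c \<mu> \<nu> (schr_pair eps c \<mu> \<nu>)"
  unfolding schr_pair_SPred
  by (rule theI') (use SP_exists SP_unique in blast)

end

theorem mainTheorem17:
  fixes eps :: real and c :: "'a::metric_space \<Rightarrow> 'a \<Rightarrow> real"
    and \<mu> \<nu> :: "'a measure"
  assumes cpt: "compact (UNIV :: 'a set)"
    and eps: "eps > 0"
    and c_cont: "continuous_on UNIV (\<lambda>(x, y). c x y)"
    and c_sym: "\<And>x y. c x y = c y x"
    and c_nonneg: "\<And>x y. c x y \<ge> 0"
    and kern_pd: "pos_def_kernel (\<lambda>x y. exp (- c x y / eps))"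
    and kern_univ: "universal_kernel (\<lambda>x y. exp (- c x y / eps))"
    and \<mu>: "prob_space \<mu>" "sets \<mu> = sets borel"
    and \<nu>: "prob_space \<nu>" "sets \<nu> = sets borel"
  shows
    \<comment> \<open>maps C(X) into C(X)\<close>
    "(\<forall>\<phi>. continuous_on UNIV \<phi> \<longrightarrow> continuous_on UNIV (L_op eps c \<mu> \<nu> \<phi>))
     \<comment> \<open>linear on C(X)\<close>
     \<and> (\<forall>\<phi> \<psi> a b. continuous_on UNIV \<phi> \<longrightarrow> continuous_on UNIV \<psi> \<longrightarrow>
          L_op eps c \<mu> \<nu> (\<lambda>x. a * \<phi> x + b * \<psi> x)
            = (\<lambda>x. a * L_op eps c \<mu> \<nu> \<phi> x + b * L_op eps c \<mu> \<nu> \<psi> x))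
     \<comment> \<open>well defined on the quotient C(X)/R: constants are mapped to constants\<close>
     \<and> (\<forall>\<phi> l. continuous_on UNIV \<phi> \<longrightarrow>
          (\<exists>\<kappa>. \<forall>x. L_op eps c \<mu> \<nu> (\<lambda>y. \<phi> y + l) x = L_op eps c \<mu> \<nu> \<phi> x + \<kappa>))
     \<comment> \<open>continuous (bounded) for the quotient norm\<close>
     \<and> (\<exists>C. \<forall>\<phi>. continuous_on UNIV \<phi> \<longrightarrow>
          quot_norm (L_op eps c \<mu> \<nu> \<phi>) \<le> C * quot_norm \<phi>)
     \<comment> \<open>injective on C(X)/R\<close>
     \<and> (\<forall>\<phi> \<psi>. continuous_on UNIV \<phi> \<longrightarrow> continuous_on UNIV \<psi> \<longrightarrow>
          (\<exists>\<kappa>. \<forall>x. L_op eps c \<mu> \<nu> \<phi> x = L_op eps c \<mu> \<nu> \<psi> x + \<kappa>) \<longrightarrow>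
          (\<exists>\<kappa>. \<forall>x. \<phi> x = \<psi> x + \<kappa>))
     \<comment> \<open>surjective on C(X)/R\<close>
     \<and> (\<forall>\<psi>. continuous_on UNIV \<psi> \<longrightarrow>
          (\<exists>\<phi>. continuous_on UNIV \<phi> \<and> (\<exists>\<kappa>. \<forall>x. L_op eps c \<mu> \<nu> \<phi> x = \<psi> x + \<kappa>)))"
proof -
  have skm: "sk eps c \<mu>" unfolding sk_def using cpt eps c_cont c_sym c_nonneg \<mu> by blast
  have skn: "sk eps c \<nu>" unfolding sk_def using cpt eps c_cont c_sym c_nonneg \<nu> by blast
  interpret m: sk eps c \<mu> by (rule skm)
  interpret n: sk eps c \<nu> by (rule skn)
  interpret S: sk2 eps c \<mu> \<nu> unfolding sk2_def using skm skn by blast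
  interpret S': sk2 eps c \<nu> \<mu> unfolding sk2_def using skm skn by blast
  obtain Cm where Cm: "\<forall>x y. 0 \<le> c x y \<and> c x y \<le> Cm" using m.Cm_ex by blast
  define \<theta> where "\<theta> = \<theta>c eps Cm"
  have tb: "0 < \<theta>" "\<theta> \<le> 1" using S.theta_bounds[OF Cm] by (auto simp: \<theta>_def)
  have t0: "0 \<le> \<theta>" using tb by simp
  have k1: "(1 - \<theta>)^2 < 1" using tb by (rule sq_lt1)
  define p where "p = schr_pair eps c \<mu> \<nu>"
  have SP: "SPred eps c \<mu> \<nu> p" unfolding p_def by (rule S.SP_the)
  define f where "f = fst p"
  define g where "g = snd p"
  have fc: "continuous_on UNIV f" and gc: "continuous_on UNIV g"
    and fT: "f = T_eps eps c g \<nu>" and gT: "g = T_eps eps c f \<mu>"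
    and fgi: "(\<integral>x. f x \<partial>\<mu>) = (\<integral>x. g x \<partial>\<nu>)"
    unfolding f_def g_def using SP[unfolded SPred_def] by blast+
  have SP': "SPred eps c \<nu> \<mu> (g, f)"
    unfolding SPred_def fst_conv snd_conv by (intro conjI fc gc gT fT fgi[symmetric])
  have pp: "schr_pair eps c \<nu> \<mu> = (g, f)" by (rule S'.SP_unique[OF S'.SP_the SP'])
  have pot1: "schr_pot eps c \<mu> \<nu> = f" by (simp add: schr_pot_def p_def f_def)
  have pot2: "schr_pot eps c \<nu> \<mu> = g" by (simp add: schr_pot_def pp)
  define q1 where "q1 y x = exp ((T_eps eps c f \<mu> y + f x - c y x) / eps)" for y x
  define q2 where "q2 x y = exp ((T_eps eps c g \<nu> x + g y - c x y) / eps)" for x y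
  have kq1: "k_eps eps c \<nu> \<mu> = q1"
    by (intro ext) (simp add: k_eps_def q1_def pot1 pot2 gT[symmetric])
  have kq2: "k_eps eps c \<mu> \<nu> = q2"
    by (intro ext) (simp add: k_eps_def q2_def pot1 pot2 fT[symmetric])
  have K1: "K_op eps c \<nu> \<mu> \<phi> = Qop \<mu> q1 \<phi>" for \<phi>
    by (intro ext) (simp add: K_op_def Qop_def kq1)
  have K2: "K_op eps c \<mu> \<nu> \<phi> = Qop \<nu> q2 \<phi>" for \<phi>
    by (intro ext) (simp add: K_op_def Qop_def kq2)
  define P where "P \<phi> = Qop \<nu> q2 (Qop \<mu> q1 \<phi>)" for \<phi>
  have Lop: "L_op eps c \<mu> \<nu> \<phi> = (\<lambda>x. \<phi> x - P \<phi> x)" for \<phi>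
    by (intro ext) (simp add: L_op_def K1 K2 P_def)
  have q1c: "continuous_on UNIV (\<lambda>p::'a\<times>'a. q1 (fst p) (snd p))"
    unfolding q1_def by (rule m.kern(1)[OF fc Cm])
  have q1p: "\<And>x y. 0 < q1 x y" by (simp add: q1_def)
  have q1i: "\<And>y. (\<integral>x. q1 y x \<partial>\<mu>) = 1" unfolding q1_def by (rule m.kern(2)[OF fc Cm])
  have q1d: "\<And>y y' x. \<theta> * q1 y' x \<le> q1 y x" unfolding q1_def \<theta>_def by (rule m.kern(3)[OF fc Cm])
  have q2c: "continuous_on UNIV (\<lambda>p::'a\<times>'a. q2 (fst p) (snd p))"
    unfolding q2_def by (rule n.kern(1)[OF gc Cm])
  have q2p: "\<And>x y. 0 < q2 x y" by (simp add: q2_def)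
  have q2i: "\<And>y. (\<integral>x. q2 y x \<partial>\<nu>) = 1" unfolding q2_def by (rule n.kern(2)[OF gc Cm])
  have q2d: "\<And>y y' x. \<theta> * q2 y' x \<le> q2 y x" unfolding q2_def \<theta>_def by (rule n.kern(3)[OF gc Cm])
  note Q1 = m.Q_cont[OF q1c q1p q1i q1d t0] m.Q_lin[OF q1c q1p q1i q1d t0]
    m.Q_shift[OF q1c q1p q1i q1d t0] m.Q_diff[OF q1c q1p q1i q1d t0]
    m.Q_absbound[OF q1c q1p q1i q1d t0] m.Q_contr[OF q1c q1p q1i q1d t0]
  note Q2 = n.Q_cont[OF q2c q2p q2i q2d t0] n.Q_lin[OF q2c q2p q2i q2d t0]
    n.Q_shift[OF q2c q2p q2i q2d t0] n.Q_diff[OF q2c q2p q2i q2d t0]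
    n.Q_absbound[OF q2c q2p q2i q2d t0] n.Q_contr[OF q2c q2p q2i q2d t0]
  have Pc: "continuous_on UNIV \<phi> \<Longrightarrow> continuous_on UNIV (P \<phi>)" for \<phi>
    unfolding P_def by (intro Q1(1) Q2(1))
  have Plin: "P (\<lambda>y. a * \<phi> y + b * \<psi> y) x = a * P \<phi> x + b * P \<psi> x"
    if pc: "continuous_on UNIV \<phi>" and sc: "continuous_on UNIV \<psi>" for \<phi> \<psi> a b x
  proof -
    have "Qop \<mu> q1 (\<lambda>y. a * \<phi> y + b * \<psi> y) = (\<lambda>y. a * Qop \<mu> q1 \<phi> y + b * Qop \<mu> q1 \<psi> y)"
      by (intro ext Q1(2)[OF pc sc])
    then show ?thesis unfolding P_def by (simp add: Q2(2)[OF Q1(1)[OF pc] Q1(1)[OF sc]])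
  qed
  have Pshift: "P (\<lambda>y. \<phi> y + l) x = P \<phi> x + l" if pc: "continuous_on UNIV \<phi>" for \<phi> l x
  proof -
    have "Qop \<mu> q1 (\<lambda>y. \<phi> y + l) = (\<lambda>y. Qop \<mu> q1 \<phi> y + l)" by (intro ext Q1(3)[OF pc])
    then show ?thesis unfolding P_def by (simp add: Q2(3)[OF Q1(1)[OF pc]])
  qed
  have Pdiff: "P (\<lambda>y. \<phi> y - \<psi> y) x = P \<phi> x - P \<psi> x"
    if pc: "continuous_on UNIV \<phi>" and sc: "continuous_on UNIV \<psi>" for \<phi> \<psi> x
  proof -
    have "Qop \<mu> q1 (\<lambda>y. \<phi> y - \<psi> y) = (\<lambda>y. Qop \<mu> q1 \<phi> y - Qop \<mu> q1 \<psi> y)"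
      by (intro ext Q1(4)[OF pc sc])
    then show ?thesis unfolding P_def by (simp add: Q2(4)[OF Q1(1)[OF pc] Q1(1)[OF sc]])
  qed
  have Pbound: "\<bar>P \<phi> x\<bar> \<le> e" if pc: "continuous_on UNIV \<phi>" and b: "\<And>y. \<bar>\<phi> y\<bar> \<le> e" for \<phi> e x
  proof -
    have "\<bar>Qop \<mu> q1 \<phi> y\<bar> \<le> e" for y by (rule Q1(5)[OF pc b])
    then show ?thesis unfolding P_def by (rule Q2(5)[OF Q1(1)[OF pc]])
  qed
  have Pcontr: "P \<phi> x - P \<phi> x' \<le> (1 - \<theta>)^2 * D"
    if pc: "continuous_on UNIV \<phi>" and D: "\<forall>y y'. \<phi> y - \<phi> y' \<le> D" for \<phi> D x x'
  proof -
    have "\<forall>y y'. Qop \<mu> q1 \<phi> y - Qop \<mu> q1 \<phi> y' \<le> (1 - \<theta>) * D"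
      using Q1(6)[OF pc D] by blast
    from Q2(6)[OF Q1(1)[OF pc] this, of x x']
    show ?thesis unfolding P_def by (simp add: power2_eq_square mult.assoc)
  qed
  have G1: "\<forall>\<phi>. continuous_on UNIV \<phi> \<longrightarrow> continuous_on UNIV (L_op eps c \<mu> \<nu> \<phi>)"
    unfolding Lop by (blast intro: continuous_intros Pc)
  have G2: "\<forall>\<phi> \<psi> a b. continuous_on UNIV \<phi> \<longrightarrow> continuous_on UNIV \<psi> \<longrightarrow>
          L_op eps c \<mu> \<nu> (\<lambda>x. a * \<phi> x + b * \<psi> x)
            = (\<lambda>x. a * L_op eps c \<mu> \<nu> \<phi> x + b * L_op eps c \<mu> \<nu> \<psi> x)"
    unfolding Lop by (auto simp: Plin algebra_simps)
  have G3: "\<forall>\<phi> l. continuous_on UNIV \<phi> \<longrightarrow>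
          (\<exists>\<kappa>. \<forall>x. L_op eps c \<mu> \<nu> (\<lambda>y. \<phi> y + l) x = L_op eps c \<mu> \<nu> \<phi> x + \<kappa>)"
    unfolding Lop by (auto simp: Pshift)
  have G4: "\<exists>C. \<forall>\<phi>. continuous_on UNIV \<phi> \<longrightarrow>
          quot_norm (L_op eps c \<mu> \<nu> \<phi>) \<le> C * quot_norm \<phi>"
  proof (intro exI allI impI)
    fix \<phi> :: "'a \<Rightarrow> real" assume pc: "continuous_on UNIV \<phi>"
    have Lc: "continuous_on UNIV (\<lambda>x. \<phi> x - P \<phi> x)" by (intro continuous_intros pc Pc)
    have bdd: "bdd_below (range (\<lambda>l. sup_norm (\<lambda>x. (\<phi> x - P \<phi> x) - l)))"
      by (rule bdd_belowI[where m=0]) (auto intro!: sup_norm_nonneg[OF cpt] continuous_intros Lc)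
    have "quot_norm (\<lambda>x. \<phi> x - P \<phi> x) \<le> 2 * sup_norm (\<lambda>x. \<phi> x - l)" for l
    proof -
      have "quot_norm (\<lambda>x. \<phi> x - P \<phi> x) \<le> sup_norm (\<lambda>x. (\<phi> x - P \<phi> x) - 0)"
        unfolding quot_norm_def by (rule cINF_lower[OF bdd UNIV_I])
      also have "\<dots> \<le> 2 * sup_norm (\<lambda>x. \<phi> x - l)"
      proof (rule sup_norm_le)
        fix x
        have plc: "continuous_on UNIV (\<lambda>x. \<phi> x - l)" by (intro continuous_intros pc)
        have b: "\<bar>\<phi> y - l\<bar> \<le> sup_norm (\<lambda>x. \<phi> x - l)" for y
          using sup_norm_ge[OF cpt plc, of y] by simp
        have "P (\<lambda>y. \<phi> y + - l) x = P \<phi> x + - l" by (rule Pshift[OF pc])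
        then have e: "\<phi> x - P \<phi> x - 0 = (\<phi> x - l) - P (\<lambda>y. \<phi> y - l) x" by simp
        have "\<bar>P (\<lambda>y. \<phi> y - l) x\<bar> \<le> sup_norm (\<lambda>x. \<phi> x - l)" by (rule Pbound[OF plc b])
        then show "\<bar>\<phi> x - P \<phi> x - 0\<bar> \<le> 2 * sup_norm (\<lambda>x. \<phi> x - l)"
          unfolding e using b[of x] by linarith
      qed
      finally show ?thesis .
    qed
    note H0 = this
    have H: "quot_norm (\<lambda>x. \<phi> x - P \<phi> x) / 2 \<le> sup_norm (\<lambda>x. \<phi> x - l)" for l
      using H0[of l] by linarith
    have "quot_norm (\<lambda>x. \<phi> x - P \<phi> x) / 2 \<le> quot_norm \<phi>"
      unfolding quot_norm_def[of \<phi>] by (rule cINF_greatest[OF UNIV_not_empty H])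
    then show "quot_norm (L_op eps c \<mu> \<nu> \<phi>) \<le> 2 * quot_norm \<phi>" unfolding Lop by simp
  qed
  have G5: "\<forall>\<phi> \<psi>. continuous_on UNIV \<phi> \<longrightarrow> continuous_on UNIV \<psi> \<longrightarrow>
          (\<exists>\<kappa>. \<forall>x. L_op eps c \<mu> \<nu> \<phi> x = L_op eps c \<mu> \<nu> \<psi> x + \<kappa>) \<longrightarrow>
          (\<exists>\<kappa>. \<forall>x. \<phi> x = \<psi> x + \<kappa>)"
  proof (intro allI impI)
    fix \<phi> \<psi> :: "'a \<Rightarrow> real"
    assume pc: "continuous_on UNIV \<phi>" and sc: "continuous_on UNIV \<psi>"
      and "\<exists>\<kappa>. \<forall>x. L_op eps c \<mu> \<nu> \<phi> x = L_op eps c \<mu> \<nu> \<psi> x + \<kappa>"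
    then obtain \<kappa> where kap: "\<And>x. \<phi> x - P \<phi> x = \<psi> x - P \<psi> x + \<kappa>" unfolding Lop by blast
    define h where "h x = \<phi> x - \<psi> x" for x
    have hc: "continuous_on UNIV h" unfolding h_def by (intro continuous_intros pc sc)
    have hP: "h x = P h x + \<kappa>" for x
      using kap[of x] Pdiff[OF pc sc, of x] unfolding h_def[abs_def] by simp
    have hconst: "h x = h x'" for x x'
    proof (rule osc_zero[OF cpt hc k1])
      fix D assume D: "\<forall>x x'. h x - h x' \<le> D"
      show "\<forall>x x'. h x - h x' \<le> (1 - \<theta>)^2 * D"
      proof (intro allI)
        fix x x'
        show "h x - h x' \<le> (1 - \<theta>)^2 * D" using Pcontr[OF hc D, of x x'] hP[of x] hP[of x'] by simp
      qed
    qed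
    show "\<exists>\<kappa>. \<forall>x. \<phi> x = \<psi> x + \<kappa>"
    proof (intro exI allI)
      fix x show "\<phi> x = \<psi> x + h undefined" using hconst[of x undefined] by (simp add: h_def)
    qed
  qed
  have G6: "\<forall>\<psi>. continuous_on UNIV \<psi> \<longrightarrow>
          (\<exists>\<phi>. continuous_on UNIV \<phi> \<and> (\<exists>\<kappa>. \<forall>x. L_op eps c \<mu> \<nu> \<phi> x = \<psi> x + \<kappa>))"
  proof (intro allI impI)
    fix \<psi> :: "'a \<Rightarrow> real" assume sc: "continuous_on UNIV \<psi>"
    define F where "F \<phi> = (\<lambda>x. \<psi> x + P \<phi> x)" for \<phi>
    have "\<exists>\<phi> k. continuous_on UNIV \<phi> \<and> (\<forall>x. F \<phi> x = \<phi> x + k)"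
    proof (rule fix_mod_const[OF cpt, where \<kappa>="(1 - \<theta>)^2"])
      show "continuous_on UNIV (F \<phi>)" if "continuous_on UNIV \<phi>" for \<phi>
        unfolding F_def by (intro continuous_intros sc Pc that)
      show "\<forall>x x'. (F \<phi> x - F \<phi>' x) - (F \<phi> x' - F \<phi>' x') \<le> (1 - \<theta>)^2 * D"
        if pc: "continuous_on UNIV \<phi>" and pc': "continuous_on UNIV \<phi>'"
          and D: "\<forall>x x'. (\<phi> x - \<phi>' x) - (\<phi> x' - \<phi>' x') \<le> D" for \<phi> \<phi>' D
      proof (intro allI)
        fix x x'
        have dc: "continuous_on UNIV (\<lambda>y. \<phi> y - \<phi>' y)" by (intro continuous_intros pc pc')
        have "P (\<lambda>y. \<phi> y - \<phi>' y) x - P (\<lambda>y. \<phi> y - \<phi>' y) x' \<le> (1 - \<theta>)^2 * D"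
          by (rule Pcontr[OF dc D])
        then show "(F \<phi> x - F \<phi>' x) - (F \<phi> x' - F \<phi>' x') \<le> (1 - \<theta>)^2 * D"
          unfolding F_def Pdiff[OF pc pc'] by simp
      qed
      show "\<forall>x. \<bar>F \<phi> x - F \<phi>' x\<bar> \<le> e"
        if pc: "continuous_on UNIV \<phi>" and pc': "continuous_on UNIV \<phi>'"
          and e: "\<forall>x. \<bar>\<phi> x - \<phi>' x\<bar> \<le> e" for \<phi> \<phi>' e
      proof
        fix x
        have dc: "continuous_on UNIV (\<lambda>y. \<phi> y - \<phi>' y)" by (intro continuous_intros pc pc')
        have "\<bar>P (\<lambda>y. \<phi> y - \<phi>' y) x\<bar> \<le> e" by (rule Pbound[OF dc]) (use e in blast)
        then show "\<bar>F \<phi> x - F \<phi>' x\<bar> \<le> e" unfolding F_def Pdiff[OF pc pc'] by simp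
      qed
      show "0 \<le> (1 - \<theta>)^2" by simp
      show "(1 - \<theta>)^2 < 1" by (rule k1)
    qed
    then obtain \<phi> k where pc: "continuous_on UNIV \<phi>" and fk: "\<And>x. \<psi> x + P \<phi> x = \<phi> x + k"
      unfolding F_def by blast
    show "\<exists>\<phi>. continuous_on UNIV \<phi> \<and> (\<exists>\<kappa>. \<forall>x. L_op eps c \<mu> \<nu> \<phi> x = \<psi> x + \<kappa>)"
    proof (intro exI conjI allI)
      show "continuous_on UNIV \<phi>" by (rule pc)
      fix x show "L_op eps c \<mu> \<nu> \<phi> x = \<psi> x + - k" unfolding Lop using fk[of x] by simp
    qed
  qed
  show ?thesis using G1 G2 G3 G4 G5 G6 by blast
qed

end
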